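(* Let $(K,\mathrm{val})$ be a $2$-henselian valued field whose residue class field $F$ is a euclidean field, and assume $(K,\mathrm{val})$ admits an angular component map $\mathrm{an}:K^\times\to F^\times$. Then: (1) $K$ is pythagorean, i.e. every sum of squares in $K$ is a square; (2) $\operatorname{PO}_K(1)=K^2$ and $\operatorname{PO}_K(-1)=K$; (3) for every $f\in K\setminus\{0\}$, $\operatorname{PO}_K(f)\in\{K^2,K\}$ if and only if $\mathrm{val}(f)\in G^2$; in particular, there exists $f\in K$ with $\operatorname{PO}_K(f)\ne K^2$ and $\operatorname{PO}_K(f)\ne K$ if and only if $G\ne G^2$; (4) every monogenic quadratic module $\operatorname{PO}_K(f)$ satisfies $K^2\subseteq\operatorname{PO}_K(f)\subseteq K$, and if $f_1,f_2\in K$ are such that $\operatorname{PO}_K(f_i)\notin\{K,K^2\}$ for $i=1,2$ and $\operatorname{PO}_K(f_1)\subseteq\operatorname{PO}_K(f_2)$, then $\operatorname{PO}_K(f_1)=\operatorname{PO}_K(f_2)$.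
   Context: Let $(G,\le)$ be a totally ordered abelian group written multiplicatively with identity $e$, and $G^2=\{g^2:g\in G\}$. Let $(K,\mathrm{val})$ be a valued field with surjective valuation $\mathrm{val}:K\to G\cup\{\infty\}$, valuation ring $B=\{x:\mathrm{val}(x)\ge e\}$, residue map $\pi:B\to F$, residue field $F$. A euclidean field is a formally real field $F$ with $F=F^2\cup(-F^2)$ (in particular $\mathrm{char}F=0$); $2$-henselian is then equivalent to every $x\in B^\times$ with $\pi(x)=1$ being a square in $K$. For $g\in G$, $\overline g$ denotes its class in $G/G^2$. An angular component map is a group homomorphism $\mathrm{an}:K^\times\to F^\times$ satisfying: (1) $\mathrm{an}(u)=\pi(u)$ for $u\in B^\times$; (2) $\mathrm{an}(ux)=\pi(u)\mathrm{an}(x)$; (3) for all $g\in G$, $c\in F^\times$ there is $w\in K$ with $\mathrm{val}(w)=g$, $\mathrm{an}(w)=c$; (4) for nonzero $x_1,x_2$ with $x_1+x_2\ne0$: if $\mathrm{val}(x_1)<\mathrm{val}(x_2)$ then $\mathrm{an}(x_1+x_2)=\mathrm{an}(x_1)$; if $\mathrm{val}(x_1)=\mathrm{val}(x_2)$ and $\mathrm{an}(x_1)+\mathrm{an}(x_2)\ne0$ then $\mathrm{val}(x_1+x_2)=\mathrm{val}(x_1)$ and $\mathrm{an}(x_1+x_2)=\mathrm{an}(x_1)+\mathrm{an}(x_2)$; (5) if $\overline{\mathrm{val}(x)}=\overline{\mathrm{val}(y)}$ and $\mathrm{an}(x)=\mathrm{an}(y)$ then $y=u^2x$ for some $u\in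 K^\times$; (6) for $a,u\in K^\times$, $\mathrm{an}(au^2)=\mathrm{an}(a)k^2$ for some $k\in F^\times$. For $f\in K$, $\operatorname{PO}_K(f)=\{\sigma_0+\sigma_1f:\ \sigma_0,\sigma_1\text{ finite sums of squares in }K\}$ is the monogenic quadratic module generated by $f$; $K^2=\{x^2:x\in K\}$. *)

theory Defs
  imports Main
begin

text \<open>The value group G is written additively: a linearly ordered abelian group
  type 'g. The valuation is v : K^x \<rightarrow> G (v 0 = \<infinity> is left implicit:
  v is only constrained on nonzero elements).  G^2 becomes {g + g}.\<close>

definition valuation :: "('k::field \<Rightarrow> 'g::linordered_ab_group_add) \<Rightarrow> bool" where
  "valuation v \<longleftrightarrow>
     (\<forall>x y. x \<noteq> 0 \<longrightarrow> y \<noteq> 0 \<longrightarrow> v (x * y) = v x + v y) \<and>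
     (\<forall>x y. x \<noteq> 0 \<longrightarrow> y \<noteq> 0 \<longrightarrow> x + y \<noteq> 0 \<longrightarrow> min (v x) (v y) \<le> v (x + y)) \<and>
     (\<forall>g. \<exists>x. x \<noteq> 0 \<and> v x = g)"

definition val_ring :: "('k::field \<Rightarrow> 'g::linordered_ab_group_add) \<Rightarrow> 'k set" where
  "val_ring v = {x. x = 0 \<or> 0 \<le> v x}"

definition val_units :: "('k::field \<Rightarrow> 'g::linordered_ab_group_add) \<Rightarrow> 'k set" where
  "val_units v = {x. x \<noteq> 0 \<and> v x = 0}"

definition residue_map ::
  "('k::field \<Rightarrow> 'g::linordered_ab_group_add) \<Rightarrow> ('k \<Rightarrow> 'f::field) \<Rightarrow> bool" where
  "residue_map v res \<longleftrightarrow>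
     (\<forall>x\<in>val_ring v. \<forall>y\<in>val_ring v. res (x + y) = res x + res y \<and> res (x * y) = res x * res y) \<and>
     res 1 = 1 \<and>
     (\<forall>c. \<exists>x\<in>val_ring v. res x = c) \<and>
     (\<forall>x\<in>val_ring v. res x = 0 \<longleftrightarrow> (x = 0 \<or> 0 < v x))"

definition sum_of_squares :: "'a::comm_ring_1 \<Rightarrow> bool" where
  "sum_of_squares s \<longleftrightarrow> (\<exists>xs. s = sum_list (map (\<lambda>x. x ^ 2) xs))"

definition formally_real :: "'a::field itself \<Rightarrow> bool" where
  "formally_real _ \<longleftrightarrow> \<not> sum_of_squares (- 1 :: 'a)"

definition euclidean_field :: "'a::field itself \<Rightarrow> bool" where
  "euclidean_field T \<longleftrightarrow> formally_real T \<and>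
     (\<forall>x::'a. (\<exists>y. x = y ^ 2) \<or> (\<exists>y. x = - (y ^ 2)))"

text \<open>2-henselian, in the form stated in the paper for residue characteristic 0 (here F euclidean).\<close>

definition two_henselian ::
  "('k::field \<Rightarrow> 'g::linordered_ab_group_add) \<Rightarrow> ('k \<Rightarrow> 'f::field) \<Rightarrow> bool" where
  "two_henselian v res \<longleftrightarrow> (\<forall>x\<in>val_units v. res x = 1 \<longrightarrow> (\<exists>y. x = y ^ 2))"

definition angular_component ::
  "('k::field \<Rightarrow> 'g::linordered_ab_group_add) \<Rightarrow> ('k \<Rightarrow> 'f::field) \<Rightarrow> ('k \<Rightarrow> 'f) \<Rightarrow> bool" where
  "angular_component v res an \<longleftrightarrow>
     \<comment> \<open>group homomorphism K^x \<rightarrow> F^x\<close>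
     (\<forall>x. x \<noteq> 0 \<longrightarrow> an x \<noteq> 0) \<and>
     (\<forall>x y. x \<noteq> 0 \<longrightarrow> y \<noteq> 0 \<longrightarrow> an (x * y) = an x * an y) \<and>
     \<comment> \<open>(1)\<close>
     (\<forall>u\<in>val_units v. an u = res u) \<and>
     \<comment> \<open>(2)\<close>
     (\<forall>u\<in>val_units v. \<forall>x. x \<noteq> 0 \<longrightarrow> an (u * x) = res u * an x) \<and>
     \<comment> \<open>(3)\<close>
     (\<forall>g c. c \<noteq> 0 \<longrightarrow> (\<exists>w. w \<noteq> 0 \<and> v w = g \<and> an w = c)) \<and>
     \<comment> \<open>(4)\<close>
     (\<forall>x1 x2. x1 \<noteq> 0 \<longrightarrow> x2 \<noteq> 0 \<longrightarrow> x1 + x2 \<noteq> 0 \<longrightarrow>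
        (v x1 < v x2 \<longrightarrow> an (x1 + x2) = an x1) \<and>
        (v x1 = v x2 \<longrightarrow> an x1 + an x2 \<noteq> 0 \<longrightarrow>
           v (x1 + x2) = v x1 \<and> an (x1 + x2) = an x1 + an x2)) \<and>
     \<comment> \<open>(5): equal classes in G/G^2 and equal angular components\<close>
     (\<forall>x y. x \<noteq> 0 \<longrightarrow> y \<noteq> 0 \<longrightarrow> (\<exists>g. v x - v y = g + g) \<longrightarrow> an x = an y \<longrightarrow>
        (\<exists>u. u \<noteq> 0 \<and> y = u ^ 2 * x)) \<and>
     \<comment> \<open>(6)\<close>
     (\<forall>a u. a \<noteq> 0 \<longrightarrow> u \<noteq> 0 \<longrightarrow> (\<exists>k. k \<noteq> 0 \<and> an (a * u ^ 2) = an a * k ^ 2))"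

definition PO :: "'k::field \<Rightarrow> 'k set" where
  "PO f = {s0 + s1 * f | s0 s1. sum_of_squares s0 \<and> sum_of_squares s1}"

definition squares :: "'k::field set" where
  "squares = {x ^ 2 | x. True}"

end

theory Submission
  imports Defs
begin

locale VF =
  fixes v :: "'k::field \<Rightarrow> 'g::linordered_ab_group_add" and res :: "'k \<Rightarrow> 'f::field"
  assumes val: "valuation v" and rm: "residue_map v res" and hen: "two_henselian v res"
    and euc: "euclidean_field TYPE('f)"
begin

lemma vmult: "x \<noteq> 0 \<Longrightarrow> y \<noteq> 0 \<Longrightarrow> v (x*y) = v x + v y"
  using val unfolding valuation_def by blast
lemma vadd: "x \<noteq> 0 \<Longrightarrow> y \<noteq> 0 \<Longrightarrow> x+y \<noteq> 0 \<Longrightarrow> min (v x) (v y) \<le> v (x+y)"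
  using val unfolding valuation_def by blast
lemma vsurj: "\<exists>x. x \<noteq> 0 \<and> v x = g"
  using val unfolding valuation_def by blast
lemma v1: "v 1 = 0" using vmult[of 1 1] by simp
lemma vinv: "x \<noteq> 0 \<Longrightarrow> v (inverse x) = - v x"
proof -
  assume "x \<noteq> 0"
  then have "v x + v (inverse x) = 0" using vmult[of x "inverse x"] v1 by simp
  then show ?thesis by (metis minus_unique)
qed
lemma vdiv: "x \<noteq> 0 \<Longrightarrow> y \<noteq> 0 \<Longrightarrow> v (x/y) = v x - v y"
  by (simp add: divide_inverse vmult vinv)
lemma vm1: "v (-1) = 0"
  using vmult[of "-1" "-1"] v1 by simp
lemma vneg: "x \<noteq> 0 \<Longrightarrow> v (-x) = v x"
  using vmult[of "-1" x] vm1 by simp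
lemma vpow2: "x \<noteq> 0 \<Longrightarrow> v (x^2) = v x + v x"
  by (simp add: power2_eq_square vmult)
lemma vlt: assumes "x \<noteq> 0" "y \<noteq> 0" "v x < v y" shows "x + y \<noteq> 0 \<and> v (x+y) = v x"
proof -
  have ne: "x + y \<noteq> 0"
  proof
    assume "x + y = 0" then have "y = -x" by (metis minus_unique)
    then show False using assms vneg by auto
  qed
  have "min (v x) (v y) \<le> v (x+y)" using vadd assms ne by blast
  then have a: "v x \<le> v (x+y)" using assms by simp
  have "min (v (x+y)) (v (-y)) \<le> v ((x+y) + (-y))" using vadd[of "x+y" "-y"] assms ne by simp
  then have "min (v (x+y)) (v y) \<le> v x" using vneg assms by simp
  then show ?thesis using a assms ne by (auto simp: min_def split: if_splits)
qed

lemma res_add: "x \<in> val_ring v \<Longrightarrow> y \<in> val_ring v \<Longrightarrow> res (x+y) = res x + res y"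
  using rm unfolding residue_map_def by blast
lemma res_mult: "x \<in> val_ring v \<Longrightarrow> y \<in> val_ring v \<Longrightarrow> res (x*y) = res x * res y"
  using rm unfolding residue_map_def by blast
lemma res1: "res 1 = 1" using rm unfolding residue_map_def by blast
lemma res_surj: "\<exists>x\<in>val_ring v. res x = c" using rm unfolding residue_map_def by blast
lemma res_zero_iff: "x \<in> val_ring v \<Longrightarrow> res x = 0 \<longleftrightarrow> (x = 0 \<or> 0 < v x)"
  using rm unfolding residue_map_def by blast

lemma B0: "0 \<in> val_ring v" by (simp add: val_ring_def)
lemma B1: "1 \<in> val_ring v" by (simp add: val_ring_def v1)
lemma Bm1: "-1 \<in> val_ring v" by (simp add: val_ring_def vm1)
lemma Bmult: "x \<in> val_ring v \<Longrightarrow> y \<in> val_ring v \<Longrightarrow> x*y \<in> val_ring v"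
  by (cases "x = 0"; cases "y = 0") (auto simp: val_ring_def vmult)
lemma Badd: "x \<in> val_ring v \<Longrightarrow> y \<in> val_ring v \<Longrightarrow> x+y \<in> val_ring v"
  unfolding val_ring_def using vadd[of x y]
  by (cases "x = 0"; cases "y = 0"; cases "x + y = 0") (auto simp: min_def split: if_splits)
lemma res0: "res 0 = 0"
proof -
  have "res 0 = res 0 + res 0" using res_add[OF B0 B0] by simp
  then show ?thesis by (metis add_cancel_right_right)
qed
lemma resm1: "res (-1) = -1"
proof -
  have "1 + res (-1) = 0" using res_add[OF B1 Bm1] res0 res1 by simp
  then show ?thesis by (metis minus_unique)
qed
lemma Bneg: "x \<in> val_ring v \<Longrightarrow> -x \<in> val_ring v"
  using Bmult[OF Bm1, of x] by simp
lemma res_neg: "x \<in> val_ring v \<Longrightarrow> res (-x) = - res x"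
  using res_mult[OF Bm1, of x] resm1 by simp
lemma unit_char: "x \<in> val_ring v \<Longrightarrow> res x \<noteq> 0 \<Longrightarrow> x \<noteq> 0 \<and> v x = 0"
  using res_zero_iff[of x] by (auto simp: val_ring_def)
lemma unit_res: "x \<noteq> 0 \<Longrightarrow> v x = 0 \<Longrightarrow> res x \<noteq> 0 \<and> x \<in> val_ring v"
  using res_zero_iff[of x] by (auto simp: val_ring_def)

lemma F_nosos: "\<not> sum_of_squares (-1 :: 'f)"
  using euc unfolding euclidean_field_def formally_real_def by blast
lemma F_nsq: "(c::'f)^2 \<noteq> -1"
  using F_nosos unfolding sum_of_squares_def by (metis list.simps(8,9) sum_list.Cons sum_list.Nil add.right_neutral)
lemma F_1sq: "\<exists>d. d \<noteq> 0 \<and> 1 + (c::'f)^2 = d^2"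
proof -
  have "(\<exists>y. 1 + c^2 = y ^ 2) \<or> (\<exists>y. 1 + c^2 = - (y ^ 2))"
    using euc unfolding euclidean_field_def by blast
  moreover have "1 + c^2 \<noteq> - (y^2)" for y
  proof
    assume "1 + c^2 = - (y^2)"
    then have "1 + (c^2 + y^2) = 0" by (metis add.assoc eq_neg_iff_add_eq_0)
    then have "-1 = sum_list (map (\<lambda>x. x^2) [c, y])" by (simp, metis minus_unique)
    then show False using F_nosos unfolding sum_of_squares_def by blast
  qed
  ultimately obtain d where "1 + c^2 = d^2" by blast
  moreover have "d \<noteq> 0" using calculation F_nsq[of c] by (auto simp: eq_neg_iff_add_eq_0 add.commute)
  ultimately show ?thesis by blast
qed
lemma F_sq_or: "\<exists>d. (c::'f) = d^2 \<or> c = - (d^2)"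
  using euc unfolding euclidean_field_def by blast

lemma sq_unit: assumes "u \<noteq> 0" "v u = 0" "res u = d^2" shows "\<exists>y. u = y^2"
proof -
  have d0: "d \<noteq> 0" using unit_res[OF assms(1,2)] assms(3) by auto
  obtain w where w: "w \<in> val_ring v" "res w = d" using res_surj by blast
  have wu: "w \<noteq> 0" "v w = 0" using unit_char[OF w(1)] w d0 by auto
  define iw where "iw = inverse w"
  have iwB: "iw \<in> val_ring v" using wu by (simp add: val_ring_def iw_def vinv)
  have "res w * res iw = 1" using res_mult[OF w(1) iwB] wu res1 by (simp add: iw_def)
  then have riw: "res iw = inverse d" using w d0 by (simp add: field_simps)
  have uB: "u \<in> val_ring v" using unit_res assms by blast
  define q where "q = u * iw * iw"
  have "res q = res u * res iw * res iw"
    unfolding q_def using res_mult Bmult uB iwB by metis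
  also have "\<dots> = 1" using assms(3) riw d0 by (simp add: power2_eq_square field_simps)
  finally have rq: "res q = 1" .
  have "q \<noteq> 0" using assms wu by (simp add: q_def iw_def)
  moreover have "v q = 0" using assms wu by (simp add: q_def iw_def vmult vinv)
  ultimately obtain y where "q = y^2" using hen rq unfolding two_henselian_def val_units_def by blast
  then have "u = (y*w)^2" using wu by (simp add: q_def iw_def power2_eq_square field_simps)
  then show ?thesis by blast
qed

lemma unit_sq_or_neg: assumes "u \<noteq> 0" "v u = 0" shows "(\<exists>y. u = y^2) \<or> (\<exists>y. -u = y^2)"
proof -
  obtain d where "res u = d^2 \<or> res u = - (d^2)" using F_sq_or by blast
  moreover have "res (-u) = - res u" using res_neg unit_res assms by blast
  moreover have "-u \<noteq> 0" "v (-u) = 0" using assms vneg by auto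
  ultimately show ?thesis using sq_unit[of u d] sq_unit[of "-u" d] assms by auto
qed

lemma one_plus: assumes "t = 0 \<or> 0 < v t" shows "\<exists>y. 1 + t = y^2"
proof (cases "t = 0")
  case True then show ?thesis by (intro exI[of _ 1]) simp
next
  case False
  then have vt: "0 < v t" using assms by simp
  have "1 + t \<noteq> 0 \<and> v (1 + t) = v 1" using vlt[of 1 t] False vt v1 by simp
  then have u: "1 + t \<noteq> 0" "v (1+t) = 0" using v1 by auto
  have tB: "t \<in> val_ring v" using vt by (simp add: val_ring_def order_less_imp_le)
  have "res (1 + t) = 1" using res_add[OF B1 tB] res_zero_iff[OF tB] vt res1 by simp
  then show ?thesis using hen u unfolding two_henselian_def val_units_def by blast
qed

lemma one_plus_sq: assumes "t \<in> val_ring v" shows "\<exists>y. 1 + t^2 = y^2"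
proof -
  have t2: "t^2 \<in> val_ring v" using Bmult[OF assms assms] by (simp add: power2_eq_square)
  have r: "res (1 + t^2) = 1 + (res t)^2"
    using res_add[OF B1 t2] res_mult[OF assms assms] res1 by (simp add: power2_eq_square)
  obtain d where d: "d \<noteq> 0" "1 + (res t)^2 = d^2" using F_1sq by blast
  have "1 + t^2 \<noteq> 0 \<and> v (1 + t^2) = 0" using unit_char[OF Badd[OF B1 t2]] r d by simp
  then show ?thesis using sq_unit[of "1+t^2" d] r d by auto
qed

lemma pyth2_aux: assumes "x \<noteq> 0" "y \<noteq> 0" "v x \<le> v y" shows "\<exists>z. x^2 + y^2 = z^2"
proof -
  define t where "t = y / x"
  have "t \<in> val_ring v" using assms by (simp add: t_def val_ring_def vdiv)
  then obtain z where "1 + t^2 = z^2" using one_plus_sq by blast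
  then have "x^2 + y^2 = (x*z)^2" using assms(1)
    by (simp add: t_def power2_eq_square field_simps)
  then show ?thesis by blast
qed

lemma pyth2: "\<exists>z. x^2 + y^2 = (z::'k)^2"
proof -
  consider "x = 0" | "y = 0" | "x \<noteq> 0" "y \<noteq> 0" "v x \<le> v y" | "x \<noteq> 0" "y \<noteq> 0" "v y \<le> v x"
    by fastforce
  then show ?thesis
  proof cases
    case 4 then show ?thesis using pyth2_aux[of y x] by (metis add.commute)
  qed (use pyth2_aux in auto)
qed


lemma sos_sq: "sum_of_squares s \<Longrightarrow> \<exists>y. s = (y::'k)^2"
proof -
  have "\<exists>y. sum_list (map (\<lambda>x. x^2) xs) = (y::'k)^2" for xs
  proof (induction xs)
    case Nil then show ?case by (intro exI[of _ 0]) simp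
  next
    case (Cons a xs)
    then obtain y where "sum_list (map (\<lambda>x. x^2) xs) = y^2" by blast
    then show ?case using pyth2[of a y] by simp
  qed
  then show "sum_of_squares s \<Longrightarrow> \<exists>y. s = (y::'k)^2" unfolding sum_of_squares_def by blast
qed

lemma sq_sos: "sum_of_squares ((y::'k)^2)"
  unfolding sum_of_squares_def by (intro exI[of _ "[y]"]) simp

lemma PO_eq: "PO (f::'k) = {a^2 + b^2 * f | a b. True}"
  unfolding PO_def using sos_sq sq_sos by blast

lemma neg1: "(-1::'k) \<noteq> y^2"
proof
  assume h: "-1 = y^2"
  then have y0: "y \<noteq> 0" by auto
  have "v y + v y = 0" using vpow2[OF y0] h vm1 by simp
  then have vy: "v y = 0" by simp
  have yB: "y \<in> val_ring v" using vy by (simp add: val_ring_def)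
  have "res (-1) = (res y)^2" using h res_mult[OF yB yB] by (simp add: power2_eq_square)
  then show False using resm1 F_nsq by metis
qed

lemma two: "(2::'k) \<noteq> 0"
proof
  assume "(2::'k) = 0"
  then have "(1::'k) + 1 = 0" by (simp only: one_add_one)
  then have "-(1::'k) = 1" by (rule minus_unique)
  then have "(-1::'k) = 1^2" by simp
  then show False using neg1 by blast
qed

lemma PO_neg_sq: assumes "e \<noteq> 0" shows "PO (-(e^2)) = (UNIV::'k set)"
proof -
  have "x \<in> PO (-(e^2))" for x
  proof -
    have 4: "(4::'k) \<noteq> 0" using two by (metis mult_2_right numeral_Bit0 mult_eq_0_iff one_add_one)
    have h1: "(x-1)/(2*e) = ((x-1)/2)/e" by simp
    have h2: "(p/e)^2 * e^2 = p^2" for p using assms by (simp add: power_divide)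
    have "((x-1)/(2*e))^2 * (-(e^2)) = - (((x-1)/(2*e))^2 * e^2)" by simp
    also have "\<dots> = - ((((x-1)/2)/e)^2 * e^2)" by (simp only: h1)
    also have "\<dots> = - (((x-1)/2)^2)" by (simp only: h2)
    finally have e1: "((x-1)/(2*e))^2 * (-(e^2)) = - (((x-1)/2)^2)" .
    have h3: "(p/(2::'k))^2 = p^2/4" for p by (simp add: power_divide)
    have B: "((x+1)/2)^2 - ((x-1)/2)^2 = ((x+1)^2 - (x-1)^2)/4"
      by (simp only: h3 diff_divide_distrib[symmetric])
    have A: "(x+1)^2 - (x-1)^2 = 4 * x" by (simp add: power2_eq_square algebra_simps)
    have C: "((x+1)/2)^2 - ((x-1)/2)^2 = x" using A B 4 by simp
    have D: "((x+1)/2)^2 + ((x-1)/(2*e))^2 * (-(e^2)) = ((x+1)/2)^2 - ((x-1)/2)^2"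
      by (subst e1) (rule diff_conv_add_uminus[symmetric])
    have "x = ((x+1)/2)^2 + ((x-1)/(2*e))^2 * (-(e^2))" using C D by simp
    then show ?thesis unfolding PO_eq by blast
  qed
  then show ?thesis by blast
qed

lemma PO_sq: "PO ((e::'k)^2) = squares"
proof -
  have "a^2 + b^2 * e^2 \<in> squares" for a b
    using pyth2[of a "b*e"] unfolding squares_def by (simp add: power_mult_distrib)
  moreover have "x^2 \<in> PO (e^2)" for x unfolding PO_eq by (intro CollectI exI[of _ x] exI[of _ 0]) simp
  ultimately show ?thesis unfolding PO_eq squares_def by blast
qed

lemma PO_scale: assumes "c \<noteq> 0" shows "PO (c^2 * f) = PO (f::'k)"
proof -
  have "a^2 + b^2 * (c^2 * f) = a^2 + (b*c)^2 * f" for a b by (simp add: power_mult_distrib)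
  moreover have "a^2 + b^2 * f = a^2 + (b/c)^2 * (c^2 * f)" for a b
    using assms by (simp add: power2_eq_square field_simps)
  ultimately show ?thesis unfolding PO_eq by blast
qed

lemma PO_even: assumes "f \<noteq> 0" "v f = g + g" shows "PO f = squares \<or> PO f = UNIV"
proof -
  obtain w where w: "w \<noteq> 0" "v w = g" using vsurj by blast
  define u where "u = f / w^2"
  have u: "u \<noteq> 0" "v u = 0" using assms w by (auto simp: u_def vdiv vpow2)
  have fu: "f = u * w^2" using w by (simp add: u_def)
  from unit_sq_or_neg[OF u] show ?thesis
  proof
    assume "\<exists>y. u = y^2"
    then obtain y where "u = y^2" by blast
    then have "f = (y*w)^2" using fu by (simp add: power_mult_distrib)
    then show ?thesis using PO_sq by auto
  next
    assume "\<exists>y. -u = y^2"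
    then obtain y where y: "-u = y^2" by blast
    then have "f = -((y*w)^2)" using fu by (simp add: power_mult_distrib) (metis minus_minus mult_minus_left)
    moreover have "y*w \<noteq> 0" using y u w by auto
    ultimately show ?thesis using PO_neg_sq by auto
  qed
qed

lemma odd_prod: assumes "\<not> (\<exists>g. v f = g + g)" "v z = (v b + v b) + v f" shows "\<not> (\<exists>g. v z = g + g)"
proof
  assume "\<exists>g. v z = g + g"
  then obtain g where "v z = g + g" by blast
  then have "v f = (g - v b) + (g - v b)" using assms(2) by (simp add: algebra_simps)
  then show False using assms(1) by blast
qed

lemma PO_odd: assumes "f \<noteq> 0" "\<not> (\<exists>g. v f = g + g)" shows "PO f \<noteq> squares \<and> PO f \<noteq> UNIV"
proof
  have "f \<in> PO f" unfolding PO_eq by (intro CollectI exI[of _ 0] exI[of _ 1]) simp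
  moreover have "f \<notin> squares"
  proof
    assume "f \<in> squares"
    then obtain y where "f = y^2" unfolding squares_def by blast
    then show False using assms vpow2[of y] by auto
  qed
  ultimately show "PO f \<noteq> squares" by blast
next
  have "-1 \<notin> PO f"
  proof
    assume "-1 \<in> PO f"
    then obtain a b where ab: "-1 = a^2 + b^2 * f" unfolding PO_eq by blast
    have b0: "b \<noteq> 0"
    proof
      assume "b = 0" then have "-1 = a^2" using ab by simp
      then show False using neg1 by blast
    qed
    define z where "z = b^2 * f"
    have z0: "z \<noteq> 0" using b0 assms by (simp add: z_def)
    have vz: "v z = (v b + v b) + v f" using b0 assms by (simp add: z_def vmult vpow2)
    have zodd: "\<not> (\<exists>g. v z = g + g)" using odd_prod[OF assms(2) vz] .
    have a0: "a \<noteq> 0"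
    proof
      assume "a = 0" then have "z = -1" using ab by (simp add: z_def)
      then show False using zodd vm1 by auto
    qed
    have va: "v (a^2) = v a + v a" using vpow2[OF a0] .
    have a20: "a^2 \<noteq> 0" using a0 by simp
    have "v (a^2) \<noteq> v z"
    proof
      assume "v (a^2) = v z" then have "v z = v a + v a" using va by simp
      then show False using zodd by blast
    qed
    then consider "v (a^2) < v z" | "v z < v (a^2)" by fastforce
    then show False
    proof cases
      case 1
      define t where "t = z / a^2"
      have "0 < v t" using 1 a20 z0 by (simp add: t_def vdiv)
      then obtain y where "1 + t = y^2" using one_plus by blast
      have "-1 = a^2 * (1 + t)" using ab a20 by (simp add: t_def z_def field_simps)
      then have "-1 = (a*y)^2" using \<open>1 + t = y^2\<close> by (simp add: power_mult_distrib)
      then show False using neg1 by blast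
    next
      case 2
      have "v (z + a^2) = v z" using vlt[OF z0 a20 2] by blast
      then have "v z = 0" using ab vm1 by (simp add: z_def add.commute)
      then show False using zodd by (metis add_0)
    qed
  qed
  then show "PO f \<noteq> UNIV" by blast
qed

lemma PO0: "PO (0::'k) = squares"
  using PO_sq[of 0] by simp

lemma rel: assumes "f1 \<noteq> 0" "f2 \<noteq> 0" "\<not> (\<exists>g. v f1 = g + g)" "\<not> (\<exists>g. v f2 = g + g)"
  "f1 \<in> PO f2" shows "\<exists>c. c \<noteq> 0 \<and> f1 = c^2 * f2"
proof -
  obtain a b where ab: "f1 = a^2 + b^2 * f2" using assms(5) unfolding PO_eq by blast
  have b0: "b \<noteq> 0"
  proof
    assume "b = 0" then have "f1 = a^2" using ab by simp
    then show False using assms(1,3) vpow2[of a] by auto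
  qed
  define z where "z = b^2 * f2"
  have z0: "z \<noteq> 0" using b0 assms by (simp add: z_def)
  have vz: "v z = (v b + v b) + v f2" using b0 assms by (simp add: z_def vmult vpow2)
  have zodd: "\<not> (\<exists>g. v z = g + g)" using odd_prod[OF assms(4) vz] .
  show ?thesis
  proof (cases "a = 0")
    case True then have "f1 = b^2 * f2" using ab by simp
    then show ?thesis using b0 by blast
  next
    case a0: False
    have va: "v (a^2) = v a + v a" using vpow2[OF a0] .
    have a20: "a^2 \<noteq> 0" using a0 by simp
    have "v (a^2) \<noteq> v z"
    proof
      assume "v (a^2) = v z" then have "v z = v a + v a" using va by simp
      then show False using zodd by blast
    qed
    then consider "v (a^2) < v z" | "v z < v (a^2)" by fastforce
    then show ?thesis
    proof cases
      case 1
      have "f1 = a^2 + z" using ab by (simp add: z_def)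
      then have "v f1 = v (a^2)" using vlt[OF a20 z0 1] by simp
      then have "v f1 = v a + v a" using va by simp
      then have False using assms(3) by blast
      then show ?thesis ..
    next
      case 2
      define t where "t = a^2 / z"
      have "v t = v (a^2) - v z" unfolding t_def by (rule vdiv[OF a20 z0])
      then have "0 < v t" using 2 by simp
      then obtain y where y: "1 + t = y^2" using one_plus by blast
      have zt: "z * t = a^2" using z0 unfolding t_def by simp
      have "f1 = z + a^2" using ab by (simp add: z_def add.commute)
      also have "\<dots> = z * (1 + t)" using zt by (simp add: distrib_left)
      also have "\<dots> = z * y^2" by (simp only: y)
      also have "\<dots> = (b*y)^2 * f2" by (simp only: z_def power_mult_distrib mult_ac)
      finally have f1: "f1 = (b*y)^2 * f2" .
      have "b*y \<noteq> 0"
      proof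
        assume "b*y = 0" then have "f1 = 0" using f1 by simp
        then show False using assms(1) by blast
      qed
      then show ?thesis using f1 by blast
    qed
  qed
qed

end

theorem mainTheorem17:
  fixes v :: "'k::field \<Rightarrow> 'g::linordered_ab_group_add"
    and res :: "'k \<Rightarrow> 'f::field"
    and an :: "'k \<Rightarrow> 'f"
  assumes "valuation v"
    and "residue_map v res"
    and "two_henselian v res"
    and "euclidean_field TYPE('f)"
    and "angular_component v res an"
  shows "(\<forall>s::'k. sum_of_squares s \<longrightarrow> (\<exists>y. s = y ^ 2))
    \<and> PO (1::'k) = squares \<and> PO (- 1 :: 'k) = UNIV
    \<and> (\<forall>f::'k. f \<noteq> 0 \<longrightarrow> ((PO f = squares \<or> PO f = UNIV) \<longleftrightarrow> (\<exists>g. v f = g + g)))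
    \<and> ((\<exists>f::'k. PO f \<noteq> squares \<and> PO f \<noteq> UNIV) \<longleftrightarrow> (\<exists>g::'g. \<forall>h. g \<noteq> h + h))
    \<and> (\<forall>f::'k. squares \<subseteq> PO f \<and> PO f \<subseteq> UNIV)
    \<and> (\<forall>f1 f2::'k. PO f1 \<notin> {UNIV, squares} \<longrightarrow> PO f2 \<notin> {UNIV, squares} \<longrightarrow>
         PO f1 \<subseteq> PO f2 \<longrightarrow> PO f1 = PO f2)"
  proof -
  interpret VF v res using assms by unfold_locales
  have P0: "\<forall>s::'k. sum_of_squares s \<longrightarrow> (\<exists>y. s = y ^ 2)" using sos_sq by blast
  have P1: "PO (1::'k) = squares" using PO_sq[of 1] by simp
  have P2: "PO (- 1 :: 'k) = UNIV" using PO_neg_sq[of 1] by simp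
  have P3: "\<forall>f::'k. f \<noteq> 0 \<longrightarrow> ((PO f = squares \<or> PO f = UNIV) \<longleftrightarrow> (\<exists>g. v f = g + g))"
    using PO_even PO_odd by blast
  have P4: "(\<exists>f::'k. PO f \<noteq> squares \<and> PO f \<noteq> UNIV) \<longleftrightarrow> (\<exists>g::'g. \<forall>h. g \<noteq> h + h)"
  proof
    assume "\<exists>f::'k. PO f \<noteq> squares \<and> PO f \<noteq> UNIV"
    then obtain f :: 'k where f: "PO f \<noteq> squares" "PO f \<noteq> UNIV" by blast
    then have "f \<noteq> 0" using PO0 by auto
    then have "\<not> (\<exists>g. v f = g + g)" using PO_even f by blast
    then show "\<exists>g::'g. \<forall>h. g \<noteq> h + h" by blast
  next
    assume "\<exists>g::'g. \<forall>h. g \<noteq> h + h"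
    then obtain g :: 'g where g: "\<forall>h. g \<noteq> h + h" by blast
    obtain f where "f \<noteq> 0" "v f = g" using vsurj by blast
    then show "\<exists>f::'k. PO f \<noteq> squares \<and> PO f \<noteq> UNIV" using PO_odd g by metis
  qed
  have P5: "\<forall>f::'k. squares \<subseteq> PO f \<and> PO f \<subseteq> UNIV"
  proof (intro allI conjI)
    fix f :: 'k
    show "squares \<subseteq> PO f"
    proof
      fix x :: 'k assume "x \<in> squares"
      then obtain y where "x = y^2" unfolding squares_def by blast
      then have "x = y^2 + 0^2 * f" by simp
      then show "x \<in> PO f" unfolding PO_eq by blast
    qed
  qed simp
  have P6: "\<forall>f1 f2::'k. PO f1 \<notin> {UNIV, squares} \<longrightarrow> PO f2 \<notin> {UNIV, squares} \<longrightarrow>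
         PO f1 \<subseteq> PO f2 \<longrightarrow> PO f1 = PO f2"
  proof (intro allI impI)
    fix f1 f2 :: 'k
    assume h1: "PO f1 \<notin> {UNIV, squares}" and h2: "PO f2 \<notin> {UNIV, squares}" and sub: "PO f1 \<subseteq> PO f2"
    have n1: "f1 \<noteq> 0" using h1 PO0 by auto
    have n2: "f2 \<noteq> 0" using h2 PO0 by auto
    have o1: "\<not> (\<exists>g. v f1 = g + g)" using h1 PO_even n1 by blast
    have o2: "\<not> (\<exists>g. v f2 = g + g)" using h2 PO_even n2 by blast
    have "f1 \<in> PO f1" unfolding PO_eq by (intro CollectI exI[of _ 0] exI[of _ 1]) simp
    then have "f1 \<in> PO f2" using sub by blast
    then obtain c where "c \<noteq> 0" "f1 = c^2 * f2" using rel[OF n1 n2 o1 o2] by blast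
    then show "PO f1 = PO f2" using PO_scale by simp
  qed
  show ?thesis using P0 P1 P2 P3 P4 P5 P6 by blast
qed

end
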